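(* Let $\mathcal{Z}_0$ be the signaling scheme output by the Split-and-Match procedure on $\mathcal{D}$. Then for every $k\in[n]$, \[4\int_0^{F_{\mathcal{D}}(v_k)} s_{\mathcal{Z}_0}(x)\,dx\ \ge\ V_k-\max_{i\in[k]}\Big\{v_i\sum_{j=i}^k f_{\mathcal{D}}(v_j)\Big\},\qquad V_k=\sum_{i=1}^k v_i f_{\mathcal{D}}(v_i).\]
   Context: Values and prior. $0<v_1<\dots<v_n$ are reals, and $v_0:=0$. $\mathcal{D}$ is a distribution on $\{v_1,\dots,v_n\}$ with $f_{\mathcal{D}}(v_i)>0$ and CDF $F_{\mathcal{D}}$. Signals and pricing. A signal is a distribution $S$ on these values, with $G_S(p)=\Pr_{v\sim S}[v\ge p]$. The seller posts $p^*_S$, the smallest $v$ in the support of $S$ maximizing $v\,G_S(v)$. The surplus of value $v$ is $cs_v(S)=\mathbb{1}[v\ge p^*_S](v-p^*_S)$. Signaling schemes. A signaling scheme is $\mathcal{Z}=\{(S_q,\gamma_q)\}_{q\in[Q]}$ with $\gamma_q\ge0$, $\sum\gamma_q=1$ and $\sum_q\gamma_q f_{S_q}=f_{\mathcal{D}}$. Its expected consumer surplus at $v_i$ is $cs_{v_i}(\mathcal{Z})=\sum_q cs_{v_i}(S_q)\gamma_q f_{S_q}(v_i)/f_{\mathcal{D}}(v_i)$. The surplus-mass function $s_{\mathcal{Z}}$ on $(0,1]$ equals $cs_{v_i}(\mathcal{Z})$ on $(F_{\mathcal{D}}(v_{i-1}),F_{\mathcal{D}}(v_i)]$. Special signals.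 For $a<b$, the equal-revenue binary signal $S^E_{a,b}$ puts mass $1-a/b$ on $a$ and $a/b$ on $b$. A singleton signal on $v_i$ puts mass $1$ on $v_i$. Split-and-Match procedure. 1. Initialize $g_i=t_i=\tfrac12 f_{\mathcal{D}}(v_i)$ for all $i$. 2. Repeat: - let $s$ be the smallest index with $g_s>0$; - let $\ell$ be the smallest index $>s$ with $t_\ell>0$; - if no such pair $(s,\ell)$ exists, stop; - otherwise add the signal $S^E_{v_s,v_\ell}$ with weight $\gamma=\min\{g_s/(1-v_s/v_\ell),\ t_\ell/(v_s/v_\ell)\}$; - set $g_s\leftarrow g_s-\gamma(1-v_s/v_\ell)$ and $t_\ell\leftarrow t_\ell-\gamma v_s/v_\ell$. 3. Finally, the remaining (unused) mass of $\mathcal{D}$ at each $v_i$ is covered by a singleton signal on $v_i$ with that weight. The result is $\mathcal{Z}_0$. *)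

theory Defs
  imports "HOL-Analysis.Analysis"
begin

text \<open>Values are indexed: value v_i is \<open>v i\<close> for \<open>i \<in> {1..n}\<close>; the prior puts mass
  \<open>f i\<close> on \<open>v i\<close>.  A signal is a distribution on the values, represented by its mass
  function on the indices \<open>{1..n}\<close>.\<close>

type_synonym signal = "nat \<Rightarrow> real"
type_synonym scheme = "(signal \<times> real) list"

definition cdf :: "(nat \<Rightarrow> real) \<Rightarrow> nat \<Rightarrow> real" where
  "cdf f k = (\<Sum>j\<in>{1..k}. f j)"

definition supp_sig :: "nat \<Rightarrow> signal \<Rightarrow> nat set" where
  "supp_sig n S = {i \<in> {1..n}. S i > 0}"

definition Gsig :: "nat \<Rightarrow> (nat \<Rightarrow> real) \<Rightarrow> signal \<Rightarrow> real \<Rightarrow> real" where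
  "Gsig n v S p = (\<Sum>j\<in>{1..n}. if v j \<ge> p then S j else 0)"

text \<open>Posted price: smallest value in the support maximizing revenue \<open>p G_S(p)\<close>
  (values are strictly increasing in the index, so smallest index = smallest value).\<close>
definition price :: "nat \<Rightarrow> (nat \<Rightarrow> real) \<Rightarrow> signal \<Rightarrow> real" where
  "price n v S = v (LEAST i. i \<in> supp_sig n S \<and>
      (\<forall>j\<in>supp_sig n S. v j * Gsig n v S (v j) \<le> v i * Gsig n v S (v i)))"

definition cs_sig :: "nat \<Rightarrow> (nat \<Rightarrow> real) \<Rightarrow> signal \<Rightarrow> real \<Rightarrow> real" where
  "cs_sig n v S x = (if x \<ge> price n v S then x - price n v S else 0)"

definition cs_scheme :: "nat \<Rightarrow> (nat \<Rightarrow> real) \<Rightarrow> (nat \<Rightarrow> real) \<Rightarrow> scheme \<Rightarrow> nat \<Rightarrow> real" where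
  "cs_scheme n v f Z i =
     sum_list (map (\<lambda>(S, \<gamma>). cs_sig n v S (v i) * \<gamma> * S i / f i) Z)"

definition surplus_mass :: "nat \<Rightarrow> (nat \<Rightarrow> real) \<Rightarrow> (nat \<Rightarrow> real) \<Rightarrow> scheme \<Rightarrow> real \<Rightarrow> real" where
  "surplus_mass n v f Z x =
     (\<Sum>i\<in>{1..n}. if cdf f (i - 1) < x \<and> x \<le> cdf f i then cs_scheme n v f Z i else 0)"

definition eq_rev_sig :: "(nat \<Rightarrow> real) \<Rightarrow> nat \<Rightarrow> nat \<Rightarrow> signal" where
  "eq_rev_sig v a b = (\<lambda>i. if i = a then 1 - v a / v b else if i = b then v a / v b else 0)"

definition singleton_sig :: "nat \<Rightarrow> signal" where
  "singleton_sig a = (\<lambda>i. if i = a then 1 else 0)"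

definition sm_step :: "nat \<Rightarrow> (nat \<Rightarrow> real) \<Rightarrow>
    (nat \<Rightarrow> real) \<times> (nat \<Rightarrow> real) \<times> scheme \<Rightarrow> (nat \<Rightarrow> real) \<times> (nat \<Rightarrow> real) \<times> scheme" where
  "sm_step n v st = (case st of (g, t, L) \<Rightarrow>
     (if \<exists>s\<in>{1..n}. g s > 0 then
        (let s = (LEAST s. s \<in> {1..n} \<and> g s > 0) in
         if \<exists>l\<in>{s<..n}. t l > 0 then
           (let l = (LEAST l. l \<in> {s<..n} \<and> t l > 0);
                r = v s / v l;
                \<gamma> = min (g s / (1 - r)) (t l / r)
            in (g(s := g s - \<gamma> * (1 - r)), t(l := t l - \<gamma> * r), L @ [(eq_rev_sig v s l, \<gamma>)]))
         else (g, t, L))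
      else (g, t, L)))"

definition sm_init :: "nat \<Rightarrow> (nat \<Rightarrow> real) \<Rightarrow> (nat \<Rightarrow> real) \<times> (nat \<Rightarrow> real) \<times> scheme" where
  "sm_init n f = ((\<lambda>i. if i \<in> {1..n} then f i / 2 else 0),
                  (\<lambda>i. if i \<in> {1..n} then f i / 2 else 0), [])"

text \<open>Each effective step sets one of the 2n coordinates g_s, t_l to zero (and they never
  become positive again), so the loop stops after at most 2n steps; afterwards \<open>sm_step\<close> is
  the identity.\<close>
definition split_and_match :: "nat \<Rightarrow> (nat \<Rightarrow> real) \<Rightarrow> (nat \<Rightarrow> real) \<Rightarrow> scheme" where
  "split_and_match n v f = (case (sm_step n v ^^ (2 * n)) (sm_init n f) of (g, t, L) \<Rightarrow>
      L @ map (\<lambda>i. (singleton_sig i, g i + t i)) [1..<n+1])"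

end

theory Submission
  imports Defs
begin


lemma cdf_Suc: "cdf f (Suc k) = cdf f k + f (Suc k)"
  unfolding cdf_def by simp

lemma cdf_mono:
  assumes fp: "\<And>i. i \<in> {1..n} \<Longrightarrow> f i > 0" and "i \<le> j" "j \<le> n"
  shows "cdf f i \<le> cdf f j"
  unfolding cdf_def
  by (rule sum_mono2) (use assms in \<open>auto intro: less_imp_le\<close>)

lemma integral_step:
  fixes f c :: "nat \<Rightarrow> real" and n k :: nat
  assumes fp: "\<And>i. i \<in> {1..n} \<Longrightarrow> f i > 0" and "k \<le> n"
  shows "((\<lambda>x. \<Sum>i\<in>{1..n}. if cdf f (i - 1) < x \<and> x \<le> cdf f i then c i else 0)
          has_integral (\<Sum>i\<in>{1..k}. f i * c i)) {0..cdf f k}"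
  using assms(2)
proof (induction k)
  case 0
  have "cdf f 0 = 0" by (simp add: cdf_def)
  then show ?case by (simp add: has_integral_refl(2))
next
  case (Suc k)
  let ?h = "(\<lambda>x. \<Sum>i\<in>{1..n}. if cdf f (i - 1) < x \<and> x \<le> cdf f i then c i else 0)"
  have IH: "(?h has_integral (\<Sum>i\<in>{1..k}. f i * c i)) {0..cdf f k}" using Suc by simp
  have c0: "0 \<le> cdf f k" using cdf_mono[OF fp, where i=0 and j=k] Suc.prems by (simp add: cdf_def)
  have c1: "cdf f k \<le> cdf f (Suc k)" using cdf_mono[OF fp, where i=k and j="Suc k"] Suc.prems by simp
  have eq: "?h x = c (Suc k)" if x: "x \<in> {cdf f k..cdf f (Suc k)} - {cdf f k}" for x
  proof -
    have "?h x = (\<Sum>i\<in>{1..n}. if i = Suc k then c i else 0)"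
    proof (rule sum.cong)
      fix i assume i: "i \<in> {1..n}"
      show "(if cdf f (i - 1) < x \<and> x \<le> cdf f i then c i else 0) = (if i = Suc k then c i else 0)"
      proof (cases "i = Suc k")
        case True then show ?thesis using x by auto
      next
        case False
        show ?thesis
        proof (cases "i \<le> k")
          case True
          then have "cdf f i \<le> cdf f k" using cdf_mono[OF fp, where i=i and j=k] Suc.prems by simp
          then show ?thesis using x False by auto
        next
          case F2: False
          then have "cdf f (Suc k) \<le> cdf f (i - 1)" using cdf_mono[OF fp, where i="Suc k" and j="i - 1"] i False by simp
          then show ?thesis using x False by auto
        qed
      qed
    qed simp
    also have "\<dots> = c (Suc k)" using Suc.prems by simp
    finally show ?thesis .
  qed
  have "((\<lambda>x. c (Suc k)) has_integral (f (Suc k) * c (Suc k))) {cdf f k..cdf f (Suc k)}"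
    using has_integral_const_real[of "c (Suc k)" "cdf f k" "cdf f (Suc k)"] c1
    by (simp add: cdf_Suc)
  from has_integral_spike_finite[OF _ _ this, of "{cdf f k}" ?h]
  have "(?h has_integral (f (Suc k) * c (Suc k))) {cdf f k..cdf f (Suc k)}"
    using eq by blast
  from has_integral_combine[OF c0 c1 IH this] show ?case by (simp add: add.commute)
qed



lemma sum_two:
  fixes h :: "nat \<Rightarrow> real"
  assumes "finite A" "s \<in> A" "l \<in> A" "s \<noteq> l" "\<And>j. j \<in> A \<Longrightarrow> j \<noteq> s \<Longrightarrow> j \<noteq> l \<Longrightarrow> h j = 0"
  shows "sum h A = h s + h l"
proof -
  have "sum h A = sum h {s, l}"
    by (rule sum.mono_neutral_right) (use assms in auto)
  then show ?thesis using assms by simp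
qed

lemma price_eq:
  assumes "1 \<le> s" "s < l" "l \<le> n" "0 < v s" "v s < v l"
  shows "price n v (eq_rev_sig v s l) = v s"
proof -
  let ?S = "eq_rev_sig v s l"
  have r0: "0 < v s / v l" "v s / v l < 1" using assms by auto
  have supp: "supp_sig n ?S = {s, l}"
    unfolding supp_sig_def eq_rev_sig_def using assms r0 by auto
  have G1: "Gsig n v ?S (v s) = 1"
    unfolding Gsig_def
    by (subst sum_two[of _ s l]) (use assms in \<open>auto simp: eq_rev_sig_def\<close>)
  have G2: "Gsig n v ?S (v l) = v s / v l"
    unfolding Gsig_def
    by (subst sum_two[of _ s l]) (use assms in \<open>auto simp: eq_rev_sig_def\<close>)
  have "(LEAST i. i \<in> supp_sig n ?S \<and>
      (\<forall>j\<in>supp_sig n ?S. v j * Gsig n v ?S (v j) \<le> v i * Gsig n v ?S (v i))) = s"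
    by (rule Least_equality) (use assms G1 G2 in \<open>auto simp: supp\<close>)
  then show ?thesis unfolding price_def by simp
qed

lemma price_single:
  assumes "a \<in> {1..n}"
  shows "price n v (singleton_sig a) = v a"
proof -
  have supp: "supp_sig n (singleton_sig a) = {a}"
    unfolding supp_sig_def singleton_sig_def using assms by auto
  have "(LEAST i. i = a \<and> v a * Gsig n v (singleton_sig a) (v a)
           \<le> v i * Gsig n v (singleton_sig a) (v i)) = a"
    by (rule Least_equality) auto
  then show ?thesis unfolding price_def supp by simp
qed

lemma term_eq:
  assumes "1 \<le> s" "s < l" "l \<le> n" "0 < v s" "v s < v l"
  shows "cs_sig n v (eq_rev_sig v s l) (v i) * \<gamma> * eq_rev_sig v s l i / f i
     = (if i = l then (v l - v s) * \<gamma> * (v s / v l) / f l else 0)"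
  using price_eq[OF assms] assms unfolding cs_sig_def eq_rev_sig_def by auto

lemma term_single:
  assumes "a \<in> {1..n}"
  shows "cs_sig n v (singleton_sig a) (v i) * \<gamma> * singleton_sig a i / f i = 0"
  using price_single[OF assms] unfolding cs_sig_def singleton_sig_def by auto



definition emb :: "(nat \<Rightarrow> real) \<Rightarrow> nat \<times> nat \<times> real \<Rightarrow> signal \<times> real" where
  "emb v e = (case e of (s, l, \<gamma>) \<Rightarrow> (eq_rev_sig v s l, \<gamma>))"

definition gsum :: "(nat \<Rightarrow> real) \<Rightarrow> (nat \<times> nat \<times> real) list \<Rightarrow> nat \<Rightarrow> real" where
  "gsum v M i = sum_list (map (\<lambda>(s, l, \<gamma>). if s = i then \<gamma> * (1 - v s / v l) else 0) M)"

definition tsum :: "(nat \<Rightarrow> real) \<Rightarrow> (nat \<times> nat \<times> real) list \<Rightarrow> nat \<Rightarrow> real" where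
  "tsum v M i = sum_list (map (\<lambda>(s, l, \<gamma>). if l = i then \<gamma> * (v s / v l) else 0) M)"

definition fixp :: "nat \<Rightarrow> (nat \<Rightarrow> real) \<Rightarrow> (nat \<Rightarrow> real) \<Rightarrow> bool" where
  "fixp n g t = (\<forall>s\<in>{1..n}. g s > 0 \<longrightarrow> (\<forall>l\<in>{s<..n}. t l \<le> 0))"


definition invM :: "nat \<Rightarrow> (nat \<Rightarrow> real) \<Rightarrow> (nat \<Rightarrow> real) \<Rightarrow> (nat \<Rightarrow> real) \<Rightarrow> (nat \<Rightarrow> real)
   \<Rightarrow> (nat \<times> nat \<times> real) list \<Rightarrow> bool" where
  "invM n v f g t M \<longleftrightarrow> (\<forall>i. 0 \<le> g i) \<and> (\<forall>i. 0 \<le> t i) \<and>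
     (\<forall>i\<in>{1..n}. f i / 2 - g i = gsum v M i) \<and>
     (\<forall>i\<in>{1..n}. f i / 2 - t i = tsum v M i) \<and>
     (\<forall>s l \<gamma>. (s, l, \<gamma>) \<in> set M \<longrightarrow> 1 \<le> s \<and> s < l \<and> l \<le> n \<and> 0 \<le> \<gamma> \<and>
          (\<forall>s'. 1 \<le> s' \<and> s' < s \<longrightarrow> g s' = 0) \<and> (\<forall>l'. s < l' \<and> l' < l \<longrightarrow> t l' = 0)) \<and>
     (\<forall>s1 l1 \<gamma>1 s2 l2 \<gamma>2. (s1, l1, \<gamma>1) \<in> set M \<longrightarrow> (s2, l2, \<gamma>2) \<in> set M \<longrightarrow> s1 < s2 \<longrightarrow> l1 \<le> l2)"

definition mu :: "nat \<Rightarrow> (nat \<Rightarrow> real) \<Rightarrow> (nat \<Rightarrow> real) \<Rightarrow> nat" where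
  "mu n g t = card {i\<in>{1..n}. g i > 0} + card {i\<in>{1..n}. t i > 0}"

lemma card_less_aux:
  fixes g g' :: "nat \<Rightarrow> real"
  assumes "\<And>i. g' i \<le> g i" "s \<in> {1..n}" "g s > 0" "\<not> g' s > 0"
  shows "card {i\<in>{1..n}. g' i > 0} < card {i\<in>{1..n}. g i > 0}"
proof (rule psubset_card_mono)
  show "finite {i\<in>{1..n}. g i > 0}" by simp
  have "{i\<in>{1..n}. g' i > 0} \<subseteq> {i\<in>{1..n}. g i > 0}" using assms(1) by (auto intro: less_le_trans)
  moreover have "s \<in> {i\<in>{1..n}. g i > 0}" "s \<notin> {i\<in>{1..n}. g' i > 0}" using assms by auto
  ultimately show "{i\<in>{1..n}. g' i > 0} \<subset> {i\<in>{1..n}. g i > 0}" by blast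
qed

lemma card_le_aux:
  fixes g g' :: "nat \<Rightarrow> real"
  assumes "\<And>i. g' i \<le> g i"
  shows "card {i\<in>{1..n}. g' i > 0} \<le> card {i\<in>{1..n}. g i > 0}"
  by (rule card_mono) (use assms in \<open>auto intro: less_le_trans\<close>)

lemma mu_less:
  assumes "\<And>i. g' i \<le> g i" "\<And>i. t' i \<le> t i"
    "(s \<in> {1..n} \<and> g s > 0 \<and> \<not> g' s > 0) \<or> (l \<in> {1..n} \<and> t l > 0 \<and> \<not> t' l > 0)"
  shows "mu n g' t' < mu n g t"
  using assms(3) card_less_aux[of g' g s n, OF assms(1)] card_less_aux[of t' t l n, OF assms(2)]
    card_le_aux[of g' g n, OF assms(1)] card_le_aux[of t' t n, OF assms(2)]
  unfolding mu_def by linarith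

lemma step_fix:
  assumes "fixp n g t"
  shows "sm_step n v (g, t, L) = (g, t, L)"
proof (cases "\<exists>s\<in>{1..n}. g s > 0")
  case True
  define s where "s = (LEAST s. s \<in> {1..n} \<and> g s > 0)"
  have sP: "s \<in> {1..n} \<and> g s > 0" unfolding s_def by (rule LeastI_ex) (use True in auto)
  then have "\<not> (\<exists>l\<in>{s<..n}. t l > 0)" using assms unfolding fixp_def by force
  then show ?thesis unfolding sm_step_def prod.case Let_def if_P[OF True] s_def[symmetric] by simp
next
  case False
  then show ?thesis unfolding sm_step_def by simp
qed

lemma sm_step_eq:
  assumes "\<exists>s\<in>{1..n}. g s > 0" "s = (LEAST s. s \<in> {1..n} \<and> g s > 0)"
    "\<exists>l\<in>{s<..n}. t l > 0" "l = (LEAST l. l \<in> {s<..n} \<and> t l > 0)"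
  shows "sm_step n v (g, t, L) =
    (g(s := g s - min (g s / (1 - v s / v l)) (t l / (v s / v l)) * (1 - v s / v l)),
     t(l := t l - min (g s / (1 - v s / v l)) (t l / (v s / v l)) * (v s / v l)),
     L @ [(eq_rev_sig v s l, min (g s / (1 - v s / v l)) (t l / (v s / v l)))])"
  unfolding sm_step_def prod.case Let_def if_P[OF assms(1)] assms(2)[symmetric] if_P[OF assms(3)]
    assms(4)[symmetric] by simp

lemma step_nonfix:
  assumes vp: "\<And>i. i \<in> {1..n} \<Longrightarrow> 0 < v i"
    and vm: "\<And>i j. 1 \<le> i \<Longrightarrow> i < j \<Longrightarrow> j \<le> n \<Longrightarrow> v i < v j"
    and inv: "invM n v f g t M" and nf: "\<not> fixp n g t"
  shows "\<exists>g' t' M'. sm_step n v (g, t, map (emb v) M) = (g', t', map (emb v) M') \<and>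
           invM n v f g' t' M' \<and> mu n g' t' < mu n g t"
proof -
  from nf obtain s1 l1 where s1: "s1 \<in> {1..n}" "g s1 > 0" and l1: "l1 \<in> {s1<..n}" "t l1 > 0"
    unfolding fixp_def by (auto simp: not_le)
  have ex: "\<exists>s\<in>{1..n}. g s > 0" using s1 by blast
  define s where "s = (LEAST s. s \<in> {1..n} \<and> g s > 0)"
  have sP: "s \<in> {1..n}" "g s > 0" unfolding s_def by (rule LeastI2_ex, use ex in auto)+
  have s_le: "s \<le> s1" unfolding s_def by (rule Least_le) (use s1 in auto)
  have sbelow: "\<not> g s' > 0" if "s' \<in> {1..n}" "s' < s" for s'
    using not_less_Least[of s' "\<lambda>s. s \<in> {1..n} \<and> g s > 0"] that unfolding s_def by auto
  have exl: "\<exists>l\<in>{s<..n}. t l > 0" using l1 s_le by force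
  define l where "l = (LEAST l. l \<in> {s<..n} \<and> t l > 0)"
  have lP: "l \<in> {s<..n}" "t l > 0" unfolding l_def by (rule LeastI2_ex, use exl in auto)+
  have lbelow: "\<not> t l' > 0" if "l' \<in> {s<..n}" "l' < l" for l'
    using not_less_Least[of l' "\<lambda>l. l \<in> {s<..n} \<and> t l > 0"] that unfolding l_def by auto
  define r where "r = v s / v l"
  define \<gamma> where "\<gamma> = min (g s / (1 - r)) (t l / r)"
  define g' where "g' = g(s := g s - \<gamma> * (1 - r))"
  define t' where "t' = t(l := t l - \<gamma> * r)"
  have vs: "0 < v s" using vp sP by auto
  have vsl: "v s < v l" using vm[of s l] sP lP by auto
  have r0: "0 < r" "r < 1" unfolding r_def using vs vsl by auto
  have g0: "0 < \<gamma>" unfolding \<gamma>_def using r0 sP lP by auto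
  have gle1: "\<gamma> * (1 - r) \<le> g s"
    using r0 unfolding \<gamma>_def by (simp add: min_def field_simps split: if_splits)
  have gle2: "\<gamma> * r \<le> t l"
    using r0 unfolding \<gamma>_def by (simp add: min_def field_simps split: if_splits)
  have zero: "g s - \<gamma> * (1 - r) = 0 \<or> t l - \<gamma> * r = 0"
    using r0 unfolding \<gamma>_def by (simp add: min_def field_simps split: if_splits)
  have step: "sm_step n v (g, t, map (emb v) M) = (g', t', map (emb v) (M @ [(s, l, \<gamma>)]))"
    unfolding sm_step_eq[OF ex s_def exl l_def] g'_def t'_def \<gamma>_def r_def emb_def by simp
  have sl: "s \<noteq> l" using lP by auto
  have g'le: "g' i \<le> g i" for i unfolding g'_def using g0 r0 by auto
  have t'le: "t' i \<le> t i" for i unfolding t'_def using g0 r0 by auto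
  note I = inv[unfolded invM_def]
  note I1 = I[THEN conjunct1]
  note I2 = I[THEN conjunct2, THEN conjunct1]
  note I3 = I[THEN conjunct2, THEN conjunct2, THEN conjunct1]
  note I4 = I[THEN conjunct2, THEN conjunct2, THEN conjunct2, THEN conjunct1]
  note I5 = I[THEN conjunct2, THEN conjunct2, THEN conjunct2, THEN conjunct2, THEN conjunct1]
  note I6 = I[THEN conjunct2, THEN conjunct2, THEN conjunct2, THEN conjunct2, THEN conjunct2]
  have J1: "\<forall>i. 0 \<le> g' i" unfolding g'_def using I1 gle1 by auto
  have J2: "\<forall>i. 0 \<le> t' i" unfolding t'_def using I2 gle2 by auto
  have J3: "\<forall>i\<in>{1..n}. f i / 2 - g' i = gsum v (M @ [(s, l, \<gamma>)]) i"
    using I3 unfolding gsum_def g'_def r_def by auto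
  have J4: "\<forall>i\<in>{1..n}. f i / 2 - t' i = tsum v (M @ [(s, l, \<gamma>)]) i"
    using I4 sl unfolding tsum_def t'_def r_def by auto
  have J5: "\<forall>s0 l0 \<gamma>0. (s0, l0, \<gamma>0) \<in> set (M @ [(s, l, \<gamma>)]) \<longrightarrow> 1 \<le> s0 \<and> s0 < l0 \<and> l0 \<le> n \<and> 0 \<le> \<gamma>0 \<and>
          (\<forall>s'. 1 \<le> s' \<and> s' < s0 \<longrightarrow> g' s' = 0) \<and> (\<forall>l'. s0 < l' \<and> l' < l0 \<longrightarrow> t' l' = 0)"
  proof (intro allI impI)
    fix s0 l0 \<gamma>0 assume "(s0, l0, \<gamma>0) \<in> set (M @ [(s, l, \<gamma>)])"
    then consider "(s0, l0, \<gamma>0) \<in> set M" | "s0 = s" "l0 = l" "\<gamma>0 = \<gamma>" by auto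
    then show "1 \<le> s0 \<and> s0 < l0 \<and> l0 \<le> n \<and> 0 \<le> \<gamma>0 \<and>
          (\<forall>s'. 1 \<le> s' \<and> s' < s0 \<longrightarrow> g' s' = 0) \<and> (\<forall>l'. s0 < l' \<and> l' < l0 \<longrightarrow> t' l' = 0)"
    proof cases
      case 1
      have h: "1 \<le> s0 \<and> s0 < l0 \<and> l0 \<le> n \<and> 0 \<le> \<gamma>0 \<and>
          (\<forall>s'. 1 \<le> s' \<and> s' < s0 \<longrightarrow> g s' = 0) \<and> (\<forall>l'. s0 < l' \<and> l' < l0 \<longrightarrow> t l' = 0)"
        using I5 1 by blast
      have a: "g' s' = 0" if "1 \<le> s' \<and> s' < s0" for s'
        using h that g'le[of s'] J1 by (metis order_antisym)
      have b: "t' l' = 0" if "s0 < l' \<and> l' < l0" for l'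
        using h that t'le[of l'] J2 by (metis order_antisym)
      show ?thesis using h a b by blast
    next
      case 2
      have a: "g' s' = 0" if "1 \<le> s'" "s' < s" for s'
        using sbelow[of s'] that sP I1 unfolding g'_def by (auto simp: not_less intro: order_antisym)
      have b: "t' l' = 0" if "s < l'" "l' < l" for l'
        using lbelow[of l'] that lP I2 unfolding t'_def by (auto simp: not_less intro: order_antisym)
      show ?thesis using 2 a b sP lP g0 by auto
    qed
  qed
  have J6: "\<forall>s1 l1 \<gamma>1 s2 l2 \<gamma>2. (s1, l1, \<gamma>1) \<in> set (M @ [(s, l, \<gamma>)]) \<longrightarrow> (s2, l2, \<gamma>2) \<in> set (M @ [(s, l, \<gamma>)])
      \<longrightarrow> s1 < s2 \<longrightarrow> l1 \<le> l2"
  proof (intro allI impI)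
    fix s1 l1 \<gamma>1 s2 l2 \<gamma>2
    assume A: "(s1, l1, \<gamma>1) \<in> set (M @ [(s, l, \<gamma>)])" "(s2, l2, \<gamma>2) \<in> set (M @ [(s, l, \<gamma>)])" "s1 < s2"
    have X: False if "(s2, l2, \<gamma>2) \<in> set M" "s < s2"
    proof -
      have "\<forall>s'. 1 \<le> s' \<and> s' < s2 \<longrightarrow> g s' = 0" using I5 that(1) by blast
      then have "g s = 0" using sP that(2) by auto
      then show False using sP by simp
    qed
    have Y: "l1 \<le> l" if "(s1, l1, \<gamma>1) \<in> set M" "s1 < s"
    proof (rule ccontr)
      assume "\<not> l1 \<le> l"
      then have "t l = 0" using I5 that lP by auto
      then show False using lP by simp
    qed
    have A1: "(s1, l1, \<gamma>1) \<in> set M \<or> (s1 = s \<and> l1 = l)" using A(1) by auto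
    have A2: "(s2, l2, \<gamma>2) \<in> set M \<or> (s2 = s \<and> l2 = l)" using A(2) by auto
    show "l1 \<le> l2"
    proof (cases "(s1, l1, \<gamma>1) \<in> set M")
      case T1: True
      show ?thesis
      proof (cases "(s2, l2, \<gamma>2) \<in> set M")
        case True
        then show ?thesis using I6 T1 A(3) by blast
      next
        case False
        then have "s2 = s" "l2 = l" using A2 by auto
        then show ?thesis using Y T1 A(3) by auto
      qed
    next
      case F1: False
      then have e: "s1 = s" "l1 = l" using A1 by auto
      show ?thesis
      proof (cases "(s2, l2, \<gamma>2) \<in> set M")
        case True
        then show ?thesis using X e A(3) by auto
      next
        case False
        then have "s2 = s" using A2 by auto
        then show ?thesis using e A(3) by auto
      qed
    qed
  qed
  have inv': "invM n v f g' t' (M @ [(s, l, \<gamma>)])"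
    unfolding invM_def using J1 J2 J3 J4 J5 J6 by blast
  have sub1: "{i\<in>{1..n}. g' i > 0} \<subseteq> {i\<in>{1..n}. g i > 0}" using g'le by (auto intro: less_le_trans)
  have sub2: "{i\<in>{1..n}. t' i > 0} \<subseteq> {i\<in>{1..n}. t i > 0}" using t'le by (auto intro: less_le_trans)
  have lin: "l \<in> {1..n}" using lP sP by auto
  have "(s \<in> {1..n} \<and> g s > 0 \<and> \<not> g' s > 0) \<or> (l \<in> {1..n} \<and> t l > 0 \<and> \<not> t' l > 0)"
    using zero sP lP lin unfolding g'_def t'_def by auto
  then have "mu n g' t' < mu n g t" by (rule mu_less[OF g'le t'le])
  then show ?thesis using step inv' by (intro exI[of _ g'] exI[of _ t'] exI[of _ "M @ [(s, l, \<gamma>)]"]) simp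
qed



lemma iter:
  assumes vp: "\<And>i. i \<in> {1..n} \<Longrightarrow> 0 < v i"
    and vm: "\<And>i j. 1 \<le> i \<Longrightarrow> i < j \<Longrightarrow> j \<le> n \<Longrightarrow> v i < v j"
    and fp: "\<And>i. i \<in> {1..n} \<Longrightarrow> f i > 0"
  shows "\<exists>g t M. (sm_step n v ^^ j) (sm_init n f) = (g, t, map (emb v) M) \<and> invM n v f g t M \<and>
           (fixp n g t \<or> mu n g t + j \<le> 2 * n)"
proof (induction j)
  case 0
  define g0 where "g0 = (\<lambda>i. if i \<in> {1..n} then f i / 2 else 0)"
  have init: "sm_init n f = (g0, g0, map (emb v) [])" unfolding sm_init_def g0_def by simp
  have "invM n v f g0 g0 []"
    unfolding invM_def gsum_def tsum_def g0_def using fp by (auto simp: less_imp_le)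
  moreover have "card {i\<in>{1..n}. g0 i > 0} \<le> n"
    using card_mono[of "{1..n}" "{i\<in>{1..n}. g0 i > 0}"] by fastforce
  ultimately show ?case using init unfolding mu_def by auto
next
  case (Suc j)
  then obtain g t M where st: "(sm_step n v ^^ j) (sm_init n f) = (g, t, map (emb v) M)"
    and inv: "invM n v f g t M" and disj: "fixp n g t \<or> mu n g t + j \<le> 2 * n" by blast
  have eq: "(sm_step n v ^^ Suc j) (sm_init n f) = sm_step n v (g, t, map (emb v) M)"
    using st by simp
  show ?case
  proof (cases "fixp n g t")
    case True
    then show ?thesis using eq step_fix[OF True] inv by auto
  next
    case False
    then have m: "mu n g t + j \<le> 2 * n" using disj by blast
    from step_nonfix[OF vp vm inv False] obtain g' t' M' where
      "sm_step n v (g, t, map (emb v) M) = (g', t', map (emb v) M')"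
      "invM n v f g' t' M'" "mu n g' t' < mu n g t" by blast
    then show ?thesis using eq m by (intro exI[of _ g'] exI[of _ t'] exI[of _ M']) auto
  qed
qed

lemma final_state:
  assumes vp: "\<And>i. i \<in> {1..n} \<Longrightarrow> 0 < v i"
    and vm: "\<And>i j. 1 \<le> i \<Longrightarrow> i < j \<Longrightarrow> j \<le> n \<Longrightarrow> v i < v j"
    and fp: "\<And>i. i \<in> {1..n} \<Longrightarrow> f i > 0"
  shows "\<exists>g t M. (sm_step n v ^^ (2 * n)) (sm_init n f) = (g, t, map (emb v) M) \<and> invM n v f g t M \<and>
           fixp n g t"
proof -
  from iter[where n=n and v=v and f=f and j="2 * n", OF vp vm fp] obtain g t M where
    A: "(sm_step n v ^^ (2 * n)) (sm_init n f) = (g, t, map (emb v) M)" "invM n v f g t M"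
      "fixp n g t \<or> mu n g t + 2 * n \<le> 2 * n" by blast
  have "fixp n g t"
  proof (cases "fixp n g t")
    case False
    then have "mu n g t = 0" using A(3) by auto
    then have "card {i\<in>{1..n}. g i > 0} = 0" unfolding mu_def by simp
    then have "{i\<in>{1..n}. g i > 0} = {}" by simp
    then show ?thesis unfolding fixp_def by auto
  qed
  then show ?thesis using A by blast
qed



lemma sum_list_zero: "(\<And>x. x \<in> set xs \<Longrightarrow> h x = (0::real)) \<Longrightarrow> sum_list (map h xs) = 0"
  by (induction xs) auto

lemma sum_list_cmult: "(c::real) * sum_list (map h xs) = sum_list (map (\<lambda>x. c * h x) xs)"
  by (induction xs) (auto simp: algebra_simps)

lemma sum_swap_list: "(\<Sum>i\<in>A. sum_list (map (h i) xs)) = sum_list (map (\<lambda>x. \<Sum>i\<in>A. (h i x :: real)) xs)"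
  by (induction xs) (simp_all add: sum.distrib)

lemma delta_l:
  assumes "finite A"
  shows "(\<Sum>i\<in>A. (case e of (s, l, \<gamma>) \<Rightarrow> if l = i then c s l \<gamma> else (0::real)))
       = (case e of (s, l, \<gamma>) \<Rightarrow> if l \<in> A then c s l \<gamma> else 0)"
  using assms by (cases e) simp

lemma delta_s:
  assumes "finite A"
  shows "(\<Sum>i\<in>A. (case e of (s, l, \<gamma>) \<Rightarrow> if s = i then c s l \<gamma> else (0::real)))
       = (case e of (s, l, \<gamma>) \<Rightarrow> if s \<in> A then c s l \<gamma> else 0)"
  using assms by (cases e) simp

theorem lemma4:
  fixes n :: nat and v f :: "nat \<Rightarrow> real" and k :: nat
  assumes v_pos: "0 < v 1"
    and v_mono: "\<And>i j. 1 \<le> i \<Longrightarrow> i < j \<Longrightarrow> j \<le> n \<Longrightarrow> v i < v j"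
    and f_pos: "\<And>i. i \<in> {1..n} \<Longrightarrow> f i > 0"
    and f_sum: "(\<Sum>i\<in>{1..n}. f i) = 1"
    and k: "k \<in> {1..n}"
  shows "4 * integral {0..cdf f k} (surplus_mass n v f (split_and_match n v f))
           \<ge> (\<Sum>i\<in>{1..k}. v i * f i) - Max ((\<lambda>i. v i * (\<Sum>j\<in>{i..k}. f j)) ` {1..k})"
proof -
  have vp: "0 < v i" if "i \<in> {1..n}" for i
  proof (cases "i = 1")
    case True then show ?thesis using v_pos by simp
  next
    case False then show ?thesis using v_mono[of 1 i] v_pos that by auto
  qed
  have vle: "v i \<le> v j" if "1 \<le> i" "i \<le> j" "j \<le> n" for i j
    using v_mono[of i j] that by (cases "i = j") auto
  obtain g t M where fs: "(sm_step n v ^^ (2 * n)) (sm_init n f) = (g, t, map (emb v) M)"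
    and inv: "invM n v f g t M" and fx: "fixp n g t"
    using final_state[where n=n and v=v and f=f, OF vp v_mono f_pos] by blast
  define Z where "Z = split_and_match n v f"
  have Zeq: "Z = map (emb v) M @ map (\<lambda>i. (singleton_sig i, g i + t i)) [1..<n+1]"
    unfolding Z_def split_and_match_def fs by simp
  note I = inv[unfolded invM_def]
  note I1 = I[THEN conjunct1]
  note I2 = I[THEN conjunct2, THEN conjunct1]
  note I3 = I[THEN conjunct2, THEN conjunct2, THEN conjunct1]
  note I4 = I[THEN conjunct2, THEN conjunct2, THEN conjunct2, THEN conjunct1]
  note I5 = I[THEN conjunct2, THEN conjunct2, THEN conjunct2, THEN conjunct2, THEN conjunct1]
  note I6 = I[THEN conjunct2, THEN conjunct2, THEN conjunct2, THEN conjunct2, THEN conjunct2]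
  have E: "1 \<le> s \<and> s < l \<and> l \<le> n \<and> 0 \<le> \<gamma>" if "(s, l, \<gamma>) \<in> set M" for s l \<gamma>
    using I5 that by blast
  define cM where "cM = (\<lambda>s l (\<gamma>::real). (v l - v s) * \<gamma> * (v s / v l))"
  have cM0: "0 \<le> cM s l \<gamma>" if "(s, l, \<gamma>) \<in> set M" for s l \<gamma>
  proof -
    have "1 \<le> s" "s < l" "l \<le> n" "0 \<le> \<gamma>" using E[OF that] by auto
    moreover have "0 < v s" "v s < v l" using vp v_mono calculation by auto
    ultimately show ?thesis unfolding cM_def by (auto intro!: mult_nonneg_nonneg)
  qed
  have csi: "f i * cs_scheme n v f Z i = sum_list (map (\<lambda>(s, l, \<gamma>). if l = i then cM s l \<gamma> else 0) M)"
    if i: "i \<in> {1..n}" for i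
  proof -
    have s0: "sum_list (map (\<lambda>(S, \<gamma>). cs_sig n v S (v i) * \<gamma> * S i / f i)
          (map (\<lambda>i. (singleton_sig i, g i + t i)) [1..<n+1])) = 0"
      by (rule sum_list_zero) (auto simp: term_single)
    have s1: "map (\<lambda>(S, \<gamma>). cs_sig n v S (v i) * \<gamma> * S i / f i) (map (emb v) M)
        = map (\<lambda>(s, l, \<gamma>). if l = i then cM s l \<gamma> / f i else 0) M"
    proof -
      have "(\<lambda>(S, \<gamma>). cs_sig n v S (v i) * \<gamma> * S i / f i) (emb v e)
          = (\<lambda>(s, l, \<gamma>). if l = i then cM s l \<gamma> / f i else 0) e" if e: "e \<in> set M" for e
      proof -
        obtain s l \<gamma> where e': "e = (s, l, \<gamma>)" by (cases e)
        have "1 \<le> s" "s < l" "l \<le> n" using E e e' by auto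
        moreover have "0 < v s" "v s < v l" using vp v_mono calculation by auto
        ultimately show ?thesis unfolding e' emb_def cM_def using term_eq[of s l n v] by simp
      qed
      then show ?thesis by simp
    qed
    have "f i * cs_scheme n v f Z i
        = f i * sum_list (map (\<lambda>(s, l, \<gamma>). if l = i then cM s l \<gamma> / f i else 0) M)"
      unfolding cs_scheme_def Zeq map_append sum_list_append s0 s1 by simp
    also have "\<dots> = sum_list (map (\<lambda>(s, l, \<gamma>). if l = i then cM s l \<gamma> else 0) M)"
      unfolding sum_list_cmult
    proof (rule arg_cong[where f=sum_list], rule map_cong[OF refl])
      fix e assume "e \<in> set M"
      show "f i * (case e of (s, l, \<gamma>) \<Rightarrow> if l = i then cM s l \<gamma> / f i else 0)
          = (case e of (s, l, \<gamma>) \<Rightarrow> if l = i then cM s l \<gamma> else 0)"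
        using f_pos[OF i] by (cases e) auto
    qed
    finally show ?thesis .
  qed
  define W where "W = sum_list (map (\<lambda>(s, l, \<gamma>). if l \<in> {1..k} then cM s l \<gamma> else 0) M)"
  have smeq: "surplus_mass n v f Z = (\<lambda>x. \<Sum>i\<in>{1..n}. if cdf f (i - 1) < x \<and> x \<le> cdf f i then cs_scheme n v f Z i else 0)"
    by (rule ext) (simp only: surplus_mass_def)
  have "integral {0..cdf f k} (surplus_mass n v f Z) = (\<Sum>i\<in>{1..k}. f i * cs_scheme n v f Z i)"
    unfolding smeq by (rule integral_unique, rule integral_step) (use f_pos k in auto)
  also have "\<dots> = (\<Sum>i\<in>{1..k}. sum_list (map (\<lambda>(s, l, \<gamma>). if l = i then cM s l \<gamma> else 0) M))"
    by (rule sum.cong[OF refl], rule csi) (use k in auto)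
  also have "\<dots> = W"
    unfolding sum_swap_list W_def by (simp add: delta_l)
  finally have intW: "integral {0..cdf f k} (surplus_mass n v f Z) = W" .
  have Pk: "g k > 0 \<or> (\<exists>l \<gamma>. (k, l, \<gamma>) \<in> set M \<and> k < l)"
  proof (rule ccontr)
    assume nP: "\<not> ?thesis"
    then have "\<not> g k > 0" by blast
    then have "g k = 0" using I1[rule_format, of k] by linarith
    then have "gsum v M k = f k / 2" using bspec[OF I3 k] by simp
    then have gs: "gsum v M k \<noteq> 0" using f_pos[OF k] by simp
    define h where "h = (\<lambda>(s::nat, l::nat, \<gamma>::real). if s = k then \<gamma> * (1 - v s / v l) else 0)"
    have "\<exists>e\<in>set M. h e \<noteq> 0"
    proof (rule ccontr)
      assume "\<not> (\<exists>e\<in>set M. h e \<noteq> 0)"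
      then have "sum_list (map h M) = 0" by (intro sum_list_zero) blast
      then show False using gs unfolding gsum_def h_def by simp
    qed
    then obtain e where e: "e \<in> set M" and ne: "h e \<noteq> 0" by blast
    obtain s l \<gamma> where e': "e = (s, l, \<gamma>)" by (cases e)
    have "s = k" using ne unfolding e' h_def by (simp split: if_splits)
    moreover have "s < l" using E e e' by auto
    ultimately have "(k, l, \<gamma>) \<in> set M \<and> k < l" using e e' by simp
    then show False using nP by blast
  qed
  define P where "P = (\<lambda>s. s \<in> {1..k} \<and> (g s > 0 \<or> (\<exists>l \<gamma>. (s, l, \<gamma>) \<in> set M \<and> k < l)))"
  define \<sigma> where "\<sigma> = (LEAST s. P s)"
  have Pk': "P k" unfolding P_def using Pk k by auto
  have \<sigma>P: "P \<sigma>" unfolding \<sigma>_def by (rule LeastI[of P k, OF Pk'])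
  have \<sigma>min: "\<not> P s" if "s < \<sigma>" for s
    using not_less_Least[of s P] that unfolding \<sigma>_def by auto
  have \<sigma>k: "1 \<le> \<sigma>" "\<sigma> \<le> k" using \<sigma>P unfolding P_def by auto
  have a1: "g i = 0" if "1 \<le> i" "i < \<sigma>" for i
  proof -
    have "i \<in> {1..k}" using that \<sigma>k by auto
    then have "\<not> g i > 0" using \<sigma>min[OF that(2)] unfolding P_def by blast
    then show ?thesis using I1[rule_format, of i] by linarith
  qed
  have a2: "l \<le> k" if "1 \<le> i" "i < \<sigma>" "(i, l, \<gamma>) \<in> set M" for i l \<gamma>
  proof -
    have "i \<in> {1..k}" using that \<sigma>k by auto
    then have "\<not> (\<exists>l \<gamma>. (i, l, \<gamma>) \<in> set M \<and> k < l)" using \<sigma>min[OF that(2)] unfolding P_def by blast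
    then show ?thesis using that(3) by (meson not_less)
  qed
  have b: "s \<le> \<sigma>" if "(s, l, \<gamma>) \<in> set M" "l \<le> k" for s l \<gamma>
  proof (rule ccontr)
    assume "\<not> s \<le> \<sigma>"
    then have ss: "\<sigma> < s" by simp
    have "g \<sigma> > 0 \<or> (\<exists>l \<gamma>. (\<sigma>, l, \<gamma>) \<in> set M \<and> k < l)" using \<sigma>P unfolding P_def by blast
    then show False
    proof
      assume "g \<sigma> > 0"
      moreover have "\<forall>s'. 1 \<le> s' \<and> s' < s \<longrightarrow> g s' = 0" using I5 that(1) by blast
      ultimately show False using ss \<sigma>k by auto
    next
      assume "\<exists>l \<gamma>. (\<sigma>, l, \<gamma>) \<in> set M \<and> k < l"
      then obtain l0 \<gamma>0 where "(\<sigma>, l0, \<gamma>0) \<in> set M" "k < l0" by blast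
      then have "l0 \<le> l" using I6 that(1) ss by blast
      then show False using that(2) \<open>k < l0\<close> by simp
    qed
  qed
  have c: "t i = 0" if "\<sigma> < i" "i \<le> k" for i
  proof -
    have "g \<sigma> > 0 \<or> (\<exists>l \<gamma>. (\<sigma>, l, \<gamma>) \<in> set M \<and> k < l)" using \<sigma>P unfolding P_def by blast
    then show ?thesis
    proof
      assume "g \<sigma> > 0"
      then have "t i \<le> 0" using fx \<sigma>k that k unfolding fixp_def by auto
      then show ?thesis using I2 by (meson order_antisym)
    next
      assume "\<exists>l \<gamma>. (\<sigma>, l, \<gamma>) \<in> set M \<and> k < l"
      then obtain l0 \<gamma>0 where "(\<sigma>, l0, \<gamma>0) \<in> set M" "k < l0" by blast
      then have "\<forall>l'. \<sigma> < l' \<and> l' < l0 \<longrightarrow> t l' = 0" using I5 by blast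
      then show ?thesis using that \<open>k < l0\<close> by auto
    qed
  qed
  define A where "A = (\<lambda>i. sum_list (map (\<lambda>(s, l, \<gamma>). if s = i then (if l \<le> k then cM s l \<gamma> else 0) else 0) M))"
  define B where "B = (\<lambda>i. sum_list (map (\<lambda>(s, l, \<gamma>). if l = i then cM s l \<gamma> else 0) M))"
  have A0: "0 \<le> A i" for i unfolding A_def
    by (rule sum_list_nonneg) (use cM0 in auto)
  have B0: "0 \<le> B i" for i unfolding B_def
    by (rule sum_list_nonneg) (use cM0 in auto)
  define T where "T = (\<lambda>i. if i < \<sigma> then v i * f i else (v i - v \<sigma>) * f i)"
  have Tb: "T i \<le> 2 * (A i + B i)" if i: "i \<in> {1..k}" for i
  proof -
    consider "i < \<sigma>" | "i = \<sigma>" | "\<sigma> < i" by linarith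
    then show ?thesis
    proof cases
      case 1
      have gi: "g i = 0" using a1[of i] i 1 by auto
      have "f i / 2 = gsum v M i" using bspec[OF I3, of i] i k gi by auto
      then have "T i = 2 * (v i * gsum v M i)" unfolding T_def using 1 by simp
      also have "v i * gsum v M i = A i"
        unfolding gsum_def A_def sum_list_cmult
      proof (rule arg_cong[where f=sum_list], rule map_cong[OF refl])
        fix e assume e: "e \<in> set M"
        obtain s l \<gamma> where e': "e = (s, l, \<gamma>)" by (cases e)
        show "v i * (case e of (s, l, \<gamma>) \<Rightarrow> if s = i then \<gamma> * (1 - v s / v l) else 0)
          = (case e of (s, l, \<gamma>) \<Rightarrow> if s = i then (if l \<le> k then cM s l \<gamma> else 0) else 0)"
        proof (cases "s = i")
          case True
          have lk: "l \<le> k" using a2[of i l \<gamma>] i 1 e e' True by auto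
          have "1 \<le> s" "s < l" "l \<le> n" using E e e' by auto
          then have "0 < v l" using vp by auto
          then show ?thesis unfolding e' cM_def using True lk by (simp add: field_simps)
        next
          case False
          then show ?thesis unfolding e' by simp
        qed
      qed
      finally show ?thesis using B0[of i] by simp
    next
      case 2
      then show ?thesis unfolding T_def using A0[of i] B0[of i] by simp
    next
      case 3
      have ti: "t i = 0" using c[of i] i 3 by auto
      have "f i / 2 = tsum v M i" using bspec[OF I4, of i] i k ti by auto
      then have "T i = 2 * ((v i - v \<sigma>) * tsum v M i)" unfolding T_def using 3 by simp
      also have "(v i - v \<sigma>) * tsum v M i \<le> B i"
        unfolding tsum_def B_def sum_list_cmult
      proof (rule sum_list_mono)
        fix e assume e: "e \<in> set M"
        obtain s l \<gamma> where e': "e = (s, l, \<gamma>)" by (cases e)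
        show "(v i - v \<sigma>) * (case e of (s, l, \<gamma>) \<Rightarrow> if l = i then \<gamma> * (v s / v l) else 0)
          \<le> (case e of (s, l, \<gamma>) \<Rightarrow> if l = i then cM s l \<gamma> else 0)"
        proof (cases "l = i")
          case True
          have sl: "1 \<le> s" "s < l" "l \<le> n" "0 \<le> \<gamma>" using E e e' by auto
          have "s \<le> \<sigma>" using b[of s l \<gamma>] e e' True i by auto
          then have "v s \<le> v \<sigma>" using vle[of s \<sigma>] sl \<sigma>k k by auto
          moreover have "0 \<le> \<gamma> * (v s / v l)"
          proof -
            have "0 < v s" "0 < v l" using sl vp by auto
            then show ?thesis using sl by simp
          qed
          ultimately have "(v l - v \<sigma>) * (\<gamma> * (v s / v l)) \<le> (v l - v s) * (\<gamma> * (v s / v l))"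
            by (intro mult_right_mono) auto
          then show ?thesis unfolding e' cM_def using True by (simp add: mult.assoc)
        next
          case False
          then show ?thesis unfolding e' by simp
        qed
      qed
      finally show ?thesis using A0[of i] by simp
    qed
  qed
  have sumT: "(\<Sum>i\<in>{1..k}. T i) = (\<Sum>i\<in>{1..k}. v i * f i) - v \<sigma> * (\<Sum>j\<in>{\<sigma>..k}. f j)"
  proof -
    have Ti: "T i = v i * f i - (if \<sigma> \<le> i then v \<sigma> * f i else 0)" for i
      unfolding T_def by (auto simp: algebra_simps)
    have "(\<Sum>i\<in>{1..k}. T i) = (\<Sum>i\<in>{1..k}. v i * f i) - (\<Sum>i\<in>{1..k}. if \<sigma> \<le> i then v \<sigma> * f i else 0)"
      unfolding Ti by (simp add: sum_subtractf)
    moreover have "(\<Sum>i\<in>{1..k}. if \<sigma> \<le> i then v \<sigma> * f i else 0) = (\<Sum>i\<in>{i\<in>{1..k}. \<sigma> \<le> i}. v \<sigma> * f i)"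
      by (rule sum.inter_filter[symmetric]) simp
    moreover have "{i\<in>{1..k}. \<sigma> \<le> i} = {\<sigma>..k}" using \<sigma>k by auto
    ultimately show ?thesis by (simp add: sum_distrib_left)
  qed
  have sumA: "(\<Sum>i\<in>{1..k}. A i) \<le> W"
  proof -
    have "(\<Sum>i\<in>{1..k}. A i) = sum_list (map (\<lambda>(s, l, \<gamma>). if s \<in> {1..k} then (if l \<le> k then cM s l \<gamma> else 0) else 0) M)"
      unfolding A_def sum_swap_list by (simp add: delta_s)
    also have "\<dots> \<le> W" unfolding W_def
    proof (rule sum_list_mono)
      fix e assume e: "e \<in> set M"
      obtain s l \<gamma> where e': "e = (s, l, \<gamma>)" by (cases e)
      have "1 \<le> s" "s < l" using E e e' by auto
      then show "(case e of (s, l, \<gamma>) \<Rightarrow> if s \<in> {1..k} then (if l \<le> k then cM s l \<gamma> else 0) else 0)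
          \<le> (case e of (s, l, \<gamma>) \<Rightarrow> if l \<in> {1..k} then cM s l \<gamma> else 0)"
        using cM0[of s l \<gamma>] e e' by auto
    qed
    finally show ?thesis .
  qed
  have sumB: "(\<Sum>i\<in>{1..k}. B i) = W"
    unfolding B_def sum_swap_list W_def by (simp add: delta_l)
  have "(\<Sum>i\<in>{1..k}. v i * f i) - v \<sigma> * (\<Sum>j\<in>{\<sigma>..k}. f j) = (\<Sum>i\<in>{1..k}. T i)"
    using sumT by simp
  also have "\<dots> \<le> (\<Sum>i\<in>{1..k}. 2 * (A i + B i))"
    by (rule sum_mono) (rule Tb)
  also have "\<dots> = 2 * ((\<Sum>i\<in>{1..k}. A i) + (\<Sum>i\<in>{1..k}. B i))"
    by (simp add: sum.distrib sum_distrib_left)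
  also have "\<dots> \<le> 2 * (W + W)" using sumA sumB by simp
  also have "\<dots> = 4 * W" by simp
  finally have main: "(\<Sum>i\<in>{1..k}. v i * f i) - v \<sigma> * (\<Sum>j\<in>{\<sigma>..k}. f j) \<le> 4 * W" .
  have "v \<sigma> * (\<Sum>j\<in>{\<sigma>..k}. f j) \<le> Max ((\<lambda>i. v i * (\<Sum>j\<in>{i..k}. f j)) ` {1..k})"
    by (rule Max_ge) (use \<sigma>k in auto)
  then show ?thesis using main intW unfolding Z_def by linarith
qed

end
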